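(* Let $\lambda_h>0$. For every $x>0$, every $\Psi\in\mathcal L$ and every nondecreasing function $g:[0,\infty)\to[0,\infty)$, $$A_{\lambda_h}(g;x,\Psi)\le_{\mathrm{st}}A_{\lambda_h}(g;x,\Psi_\infty).$$
   Context: $\mathcal L$ is the set of all bivariate cdfs with support in $(0,\infty)\times(0,\infty]$. For $\Psi\in\mathcal L$, $G(s)=\Psi(s,\infty)$. $\Psi_\infty$ denotes the cdf of a random vector $(S,Y)$ with $S\sim G$ and $Y=\infty$ almost surely, so that all customers join. The $M/G(\Psi)/1+H(\Psi)$ queue with rate $\lambda_h$ and initial workload $x$ is defined as follows. - It is a single-server FCFS queue with infinite waiting room. - There is one initial customer with remaining service $x$. - Arrivals form a Poisson process of rate $\lambda_h$. - $(S_i,Y_i)$ are iid with cdf $\Psi$ and independent of the arrivals. - The $i$-th arrival at time $T_i$ joins if and only if $Y_i\ge W(T_i-)$, where $W$ is the workload (decreasing at unit rate while positive), and if he joins he adds $S_i$. $W_{\lambda_h}(\cdot;x,\Psi)$ denotes the workload and $\tau_{\lambda_h}(x;\Psi)$ its first hitting time of $0$. Define $$A_{\lambda_h}(g;x,\Psi)=\int_0^{\tau_{\lambda_h}(x;\Psi)}g(W_{\lambda_h}(t;x,\Psi))\,dt.$$ $X\le_{\mathrm{st}}Y$ means $P(X>s)\le P(Y>s)$ for all $s$. *)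

theory Defs
  imports "HOL-Probability.Probability"
begin

text \<open>Sample point: omega n = (E_n, (S_n, Y_n)) where E_n is the interarrival time
  preceding arrival n+1 and (S_n, Y_n) are the marks (service, patience) of arrival n+1.\<close>

type_synonym sample = "nat \<Rightarrow> real \<times> real \<times> ereal"

definition in_L :: "(real \<times> ereal) measure \<Rightarrow> bool" where
  "in_L Psi \<longleftrightarrow> prob_space Psi \<and> sets Psi = sets borel \<and>
     (AE p in Psi. 0 < fst p \<and> 0 < snd p)"

definition Psi_inf :: "(real \<times> ereal) measure \<Rightarrow> (real \<times> ereal) measure" where
  "Psi_inf Psi = distr Psi borel (\<lambda>p. (fst p, \<infinity>))"

definition queue_space :: "real \<Rightarrow> (real \<times> ereal) measure \<Rightarrow> sample measure" where
  "queue_space lam Psi =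
     (\<Pi>\<^sub>M n\<in>(UNIV::nat set). density lborel (exponential_density lam) \<Otimes>\<^sub>M Psi)"

text \<open>Time of the n-th arrival (arr_time w 0 = 0 is the time of the initial customer).\<close>
definition arr_time :: "sample \<Rightarrow> nat \<Rightarrow> real" where
  "arr_time w n = (\<Sum>i<n. fst (w i))"

text \<open>Workload just after the n-th arrival epoch (after the decision of arrival n).\<close>
fun wplus :: "real \<Rightarrow> sample \<Rightarrow> nat \<Rightarrow> real" where
  "wplus x w 0 = x"
| "wplus x w (Suc n) =
     (let v = max 0 (wplus x w n - fst (w n)); s = fst (snd (w n)); y = snd (snd (w n))
      in if ereal v \<le> y then v + s else v)"

definition workload :: "real \<Rightarrow> sample \<Rightarrow> real \<Rightarrow> real" where
  "workload x w t =
     (let n = (LEAST n. t < arr_time w (Suc n)) in max 0 (wplus x w n - (t - arr_time w n)))"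

text \<open>First hitting time of 0 (infinity if never hit).\<close>
definition hit_time :: "real \<Rightarrow> sample \<Rightarrow> ereal" where
  "hit_time x w = Inf (ereal ` {t. 0 \<le> t \<and> workload x w t = 0})"

definition A_fun :: "(real \<Rightarrow> real) \<Rightarrow> real \<Rightarrow> sample \<Rightarrow> ennreal" where
  "A_fun g x w =
     (\<integral>\<^sup>+ t. indicator {t. 0 \<le> t \<and> ereal t < hit_time x w} t * ennreal (g (workload x w t)) \<partial>lborel)"

end

theory Submission
  imports Defs
begin


lemma meas_map:
  assumes h: "h \<in> measurable M N"
  shows "(\<lambda>w i. h (w i)) \<in> measurable (PiM (UNIV::nat set) (\<lambda>_. M)) (PiM UNIV (\<lambda>_. N))"
proof (rule measurable_PiM_single')
  fix i :: nat show "(\<lambda>w. h (w i)) \<in> measurable (PiM (UNIV::nat set) (\<lambda>_. M)) N"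
    using h by measurable
next
  show "(\<lambda>w i. h (w i)) \<in> space (PiM (UNIV::nat set) (\<lambda>_. M)) \<rightarrow> (\<Pi>\<^sub>E i\<in>UNIV. space N)"
    using h by (auto simp: space_PiM PiE_iff intro!: measurable_space[OF h])
qed

lemma distr_PiM_map:
  fixes M :: "'a measure" and N :: "'b measure"
  assumes P: "prob_space M" and h: "h \<in> measurable M N"
  shows "distr (PiM (UNIV::nat set) (\<lambda>_. M)) (PiM UNIV (\<lambda>_. N)) (\<lambda>w i. h (w i))
       = PiM UNIV (\<lambda>_. distr M N h)"
proof (rule measure_eqI_PiM_infinite[symmetric, where M="\<lambda>_. distr M N h"])
  have ps: "prob_space (distr M N h)" using P h by (simp add: prob_space.prob_space_distr)
  interpret prob_space "PiM (UNIV::nat set) (\<lambda>_. distr M N h)"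
    using ps by (intro prob_space_PiM) auto
  show "finite_measure (PiM (UNIV::nat set) (\<lambda>_. distr M N h))" by unfold_locales
  show "sets (PiM (UNIV::nat set) (\<lambda>_. distr M N h)) = sets (PiM UNIV (\<lambda>_. distr M N h))" by simp
  show "sets (distr (PiM (UNIV::nat set) (\<lambda>_. M)) (PiM UNIV (\<lambda>_. N)) (\<lambda>w i. h (w i))) = sets (PiM UNIV (\<lambda>_. distr M N h))"
    by (simp cong: sets_PiM_cong)
  fix J A assume J: "finite J" "J \<subseteq> (UNIV::nat set)" and A: "\<And>i. i \<in> J \<Longrightarrow> A i \<in> sets (distr M N h)"
  have mF: "(\<lambda>w i. h (w i)) \<in> measurable (PiM (UNIV::nat set) (\<lambda>_. M)) (PiM UNIV (\<lambda>_. N))"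
    using h by (rule meas_map)
  have "emeasure (PiM UNIV (\<lambda>_. distr M N h)) (prod_emb UNIV (\<lambda>_. distr M N h) J (Pi\<^sub>E J A))
      = (\<Prod>i\<in>J. emeasure (distr M N h) (A i))"
    using J A ps by (intro emeasure_PiM_emb) auto
  also have "\<dots> = (\<Prod>i\<in>J. emeasure M (h -` A i \<inter> space M))"
    using A h by (intro prod.cong refl emeasure_distr) auto
  also have "\<dots> = emeasure (PiM UNIV (\<lambda>_. M)) (prod_emb UNIV (\<lambda>_. M) J (Pi\<^sub>E J (\<lambda>i. h -` A i \<inter> space M)))"
    using J A h P by (intro emeasure_PiM_emb[symmetric]) (auto intro!: measurable_sets)
  also have "prod_emb UNIV (\<lambda>_. M) J (Pi\<^sub>E J (\<lambda>i. h -` A i \<inter> space M))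
      = (\<lambda>w i. h (w i)) -` prod_emb UNIV (\<lambda>_. distr M N h) J (Pi\<^sub>E J A) \<inter> space (PiM UNIV (\<lambda>_. M))"
    using h by (auto simp: prod_emb_def space_PiM PiE_iff measurable_space)
  also have "emeasure (PiM UNIV (\<lambda>_. M)) \<dots> = emeasure (distr (PiM (UNIV::nat set) (\<lambda>_. M)) (PiM UNIV (\<lambda>_. N)) (\<lambda>w i. h (w i))) (prod_emb UNIV (\<lambda>_. distr M N h) J (Pi\<^sub>E J A))"
  proof (intro emeasure_distr[symmetric] mF)
    have "prod_emb UNIV (\<lambda>_. distr M N h) J (Pi\<^sub>E J A) \<in> sets (PiM UNIV (\<lambda>_. distr M N h))"
      using J A by (intro sets_PiM_I) auto
    then show "prod_emb UNIV (\<lambda>_. distr M N h) J (Pi\<^sub>E J A) \<in> sets (PiM UNIV (\<lambda>_. N))"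
      by (simp cong: sets_PiM_cong)
  qed
  finally show "emeasure (PiM UNIV (\<lambda>_. distr M N h)) (prod_emb UNIV (\<lambda>_. distr M N h) J (Pi\<^sub>E J A)) = emeasure (distr (PiM (UNIV::nat set) (\<lambda>_. M)) (PiM UNIV (\<lambda>_. N)) (\<lambda>w i. h (w i))) (prod_emb UNIV (\<lambda>_. distr M N h) J (Pi\<^sub>E J A))" .
qed


definition Fmap :: "sample \<Rightarrow> sample" where
  "Fmap w = (\<lambda>n. (fst (w n), fst (snd (w n)), \<infinity>))"

lemma arr_time_Fmap[simp]: "arr_time (Fmap w) = arr_time w"
  by (simp add: arr_time_def Fmap_def fun_eq_iff)

lemma wplus_nonneg: "0 \<le> x \<Longrightarrow> (\<forall>n. 0 \<le> fst (snd (w n))) \<Longrightarrow> 0 \<le> wplus x w n"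
  by (induction n) (auto simp: Let_def)

lemma wplus_Fmap:
  assumes "\<forall>n. 0 \<le> fst (snd (w n))"
  shows "wplus x w n \<le> wplus x (Fmap w) n"
proof (induction n)
  case 0 then show ?case by simp
next
  case (Suc n)
  have s: "0 \<le> fst (snd (w n))" using assms by auto
  have "max 0 (wplus x w n - fst (w n)) \<le> max 0 (wplus x (Fmap w) n - fst (w n))"
    using Suc by auto
  then show ?case using s by (auto simp: Let_def Fmap_def)
qed

lemma workload_Fmap:
  assumes "\<forall>n. 0 \<le> fst (snd (w n))"
  shows "workload x w t \<le> workload x (Fmap w) t"
proof -
  define n where "n = (LEAST n. t < arr_time w (Suc n))"
  have "workload x w t = max 0 (wplus x w n - (t - arr_time w n))"
    by (simp add: workload_def Let_def n_def)
  moreover have "workload x (Fmap w) t = max 0 (wplus x (Fmap w) n - (t - arr_time w n))"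
    by (simp add: workload_def Let_def n_def)
  moreover have "wplus x w n \<le> wplus x (Fmap w) n" by (rule wplus_Fmap[OF assms])
  ultimately show ?thesis by linarith
qed

lemma workload_nonneg: "0 \<le> workload x w t"
  by (simp add: workload_def Let_def)

lemma hit_time_Fmap:
  assumes "\<forall>n. 0 \<le> fst (snd (w n))"
  shows "hit_time x w \<le> hit_time x (Fmap w)"
  unfolding hit_time_def
proof (rule Inf_superset_mono)
  show "ereal ` {t. 0 \<le> t \<and> workload x (Fmap w) t = 0} \<subseteq> ereal ` {t. 0 \<le> t \<and> workload x w t = 0}"
  proof (rule image_mono, safe)
    fix t assume "0 \<le> t" "workload x (Fmap w) t = 0"
    then show "workload x w t = 0"
      using workload_Fmap[OF assms, of x t] workload_nonneg[of x w t] by linarith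
  qed
qed

lemma A_fun_Fmap:
  assumes "\<forall>n. 0 \<le> fst (snd (w n))" and g: "mono_on {0..} g"
  shows "A_fun g x w \<le> A_fun g x (Fmap w)"
  unfolding A_fun_def
proof (rule nn_integral_mono)
  fix t
  show "indicator {t. 0 \<le> t \<and> ereal t < hit_time x w} t * ennreal (g (workload x w t))
      \<le> indicator {t. 0 \<le> t \<and> ereal t < hit_time x (Fmap w)} t * ennreal (g (workload x (Fmap w) t))"
  proof (cases "0 \<le> t \<and> ereal t < hit_time x w")
    case True
    then have "0 \<le> t \<and> ereal t < hit_time x (Fmap w)"
      using hit_time_Fmap[OF assms(1)] by (meson order_less_le_trans)
    moreover have "g (workload x w t) \<le> g (workload x (Fmap w) t)"
      using g workload_Fmap[OF assms(1), of x t] workload_nonneg[of x w t] workload_nonneg[of x "Fmap w" t]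
      by (intro mono_onD[OF g]) auto
    ultimately show ?thesis using True by (simp add: ennreal_leI)
  next
    case False then show ?thesis by simp
  qed
qed

theorem lemma2:
  fixes lam x :: real and Psi :: "(real \<times> ereal) measure" and g :: "real \<Rightarrow> real"
  assumes "lam > 0" and "x > 0" and "in_L Psi"
    and "mono_on {0..} g" and "\<forall>u\<ge>0. g u \<ge> 0"
  shows "\<forall>s::ennreal.
     measure (queue_space lam Psi) {w \<in> space (queue_space lam Psi). s < A_fun g x w}
     \<le> measure (queue_space lam (Psi_inf Psi)) {w \<in> space (queue_space lam (Psi_inf Psi)). s < A_fun g x w}"
proof
  fix s :: ennreal
  define E where "E = density lborel (exponential_density lam)"
  have psE: "prob_space E" unfolding E_def using assms(1) by (rule prob_space_exponential_density)
  have psPsi: "prob_space Psi" and setsPsi: "sets Psi = sets borel"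
    and AEPsi: "AE p in Psi. 0 < fst p \<and> 0 < snd p"
    using assms(3) by (auto simp: in_L_def)
  have spPsi: "space Psi = UNIV" using sets_eq_imp_space_eq[OF setsPsi] by simp
  define phi :: "real \<times> ereal \<Rightarrow> real \<times> ereal" where "phi = (\<lambda>p. (fst p, \<infinity>))"
  have mphi: "phi \<in> measurable Psi borel"
  proof -
    have "(\<lambda>p::real\<times>ereal. (fst p, \<infinity>::ereal)) \<in> measurable (borel \<Otimes>\<^sub>M borel) (borel \<Otimes>\<^sub>M borel)"
      by measurable
    then show ?thesis unfolding phi_def borel_prod by (simp add: measurable_cong_sets[OF setsPsi refl])
  qed
  define hh :: "real \<times> real \<times> ereal \<Rightarrow> real \<times> real \<times> ereal" where "hh = (\<lambda>(e, p). (e, phi p))"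
  define P1 where "P1 = E \<Otimes>\<^sub>M Psi"
  define N1 where "N1 = E \<Otimes>\<^sub>M (borel :: (real \<times> ereal) measure)"
  have psP1: "prob_space P1" unfolding P1_def using psE psPsi by (rule prob_space_pair)
  have psPi: "prob_space (Psi_inf Psi)" unfolding Psi_inf_def
    using psPsi mphi unfolding phi_def by (simp add: prob_space.prob_space_distr)
  have P2: "E \<Otimes>\<^sub>M Psi_inf Psi = distr P1 N1 hh"
  proof -
    have "distr E E (\<lambda>x. x) \<Otimes>\<^sub>M distr Psi borel phi = distr (E \<Otimes>\<^sub>M Psi) (E \<Otimes>\<^sub>M borel) (\<lambda>(x, y). (x, phi y))"
      by (rule pair_measure_distr) (use mphi psPi in \<open>auto simp: Psi_inf_def phi_def intro: prob_space_imp_sigma_finite\<close>)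
    then show ?thesis by (simp add: Psi_inf_def phi_def P1_def N1_def hh_def)
  qed
  have mhh: "hh \<in> measurable P1 N1"
    unfolding hh_def P1_def N1_def using mphi by measurable
  have Fm: "(\<lambda>w i. hh (w i)) = Fmap"
    by (auto simp: fun_eq_iff hh_def phi_def Fmap_def split: prod.splits)
  define M where "M = queue_space lam Psi"
  define N where "N = PiM (UNIV::nat set) (\<lambda>_. N1)"
  have M_def': "M = PiM UNIV (\<lambda>_. P1)" by (simp add: M_def queue_space_def P1_def E_def)
  have M2: "queue_space lam (Psi_inf Psi) = distr M N Fmap"
    unfolding M_def' N_def queue_space_def
    using distr_PiM_map[OF psP1 mhh] P2 Fm by (simp add: E_def)
  have setsMN: "sets M = sets N"
    unfolding M_def' N_def P1_def N1_def
    by (intro sets_PiM_cong refl sets_pair_measure_cong setsPsi)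
  have spMN: "space M = space N" by (rule sets_eq_imp_space_eq[OF setsMN])
  have mF: "Fmap \<in> measurable M N"
    using meas_map[OF mhh] Fm by (simp add: M_def' N_def)
  interpret PM: prob_space M unfolding M_def' using psP1 by (intro prob_space_PiM) auto
  define D where "D = {w \<in> space M. s < A_fun g x w}"
  have spM2: "space (queue_space lam (Psi_inf Psi)) = space M" using M2 spMN by simp
  show "measure (queue_space lam Psi) {w \<in> space (queue_space lam Psi). s < A_fun g x w}
     \<le> measure (queue_space lam (Psi_inf Psi)) {w \<in> space (queue_space lam (Psi_inf Psi)). s < A_fun g x w}"
  proof (cases "D \<in> sets M")
    case False
    then show ?thesis unfolding spM2 by (simp add: M_def[symmetric] D_def[symmetric] measure_notin_sets)
  next
    case True
    have DN: "D \<in> sets N" using True setsMN by simp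
    have eq: "measure (queue_space lam (Psi_inf Psi)) D = measure M (Fmap -` D \<inter> space M)"
      unfolding M2 using mF DN by (rule measure_distr)
    have AE1: "AE p in P1. 0 \<le> fst (snd p)"
    proof -
      interpret pair_sigma_finite E Psi
        using psE psPsi by (auto intro!: pair_sigma_finite.intro prob_space_imp_sigma_finite)
      show ?thesis unfolding P1_def
      proof (rule AE_pair_measure)
        show "{p \<in> space (E \<Otimes>\<^sub>M Psi). 0 \<le> fst (snd p)} \<in> sets (E \<Otimes>\<^sub>M Psi)"
        proof -
          have "(fst :: real \<times> ereal \<Rightarrow> real) \<in> borel_measurable (borel \<Otimes>\<^sub>M borel)" by measurable
          then have mf: "(fst :: real \<times> ereal \<Rightarrow> real) \<in> borel_measurable Psi"
            unfolding borel_prod by (simp add: measurable_cong_sets[OF setsPsi refl])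
          have "(\<lambda>p. fst (snd p)) \<in> borel_measurable (E \<Otimes>\<^sub>M Psi)"
            using mf by measurable
          then show ?thesis by measurable
        qed
        show "AE x in E. AE y in Psi. 0 \<le> fst (snd (x, y))"
          using AEPsi by (auto elim: AE_mp)
      qed
    qed
    have AEM: "AE w in M. \<forall>n. 0 \<le> fst (snd (w n))"
      unfolding AE_all_countable M_def'
      using AE1 psP1 by (auto intro: AE_PiM_component)
    have "measure M D \<le> measure M (Fmap -` D \<inter> space M)"
    proof (rule PM.finite_measure_mono_AE)
      show "Fmap -` D \<inter> space M \<in> sets M" using mF DN by (rule measurable_sets)
      show "AE w in M. w \<in> D \<longrightarrow> w \<in> Fmap -` D \<inter> space M"
        using AEM
      proof (rule AE_mp, intro AE_I2 impI)
        fix w assume w: "w \<in> space M" "\<forall>n. 0 \<le> fst (snd (w n))" "w \<in> D"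
        have "Fmap w \<in> space M" using measurable_space[OF mF w(1)] spMN by simp
        moreover have "s < A_fun g x (Fmap w)"
          using w(3) A_fun_Fmap[OF w(2) assms(4), of x] unfolding D_def by auto
        ultimately show "w \<in> Fmap -` D \<inter> space M" using w(1) unfolding D_def by auto
      qed
    qed
    then show ?thesis using eq unfolding spM2 by (simp add: M_def[symmetric] D_def[symmetric])
  qed
qed

end
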